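(* Let $G$ be a circle intersection graph (with at least one vertex). Then $G$ has a vertex $v$ such that the subgraph of $G$ induced on $\{v\}\cup N(v)$ does not contain an induced subgraph isomorphic to $K_{1,6}$.
   Context: A graph $G$ is a circle intersection graph if its vertices can be put in one-to-one correspondence with closed disks (circles) of arbitrary positive radii in the plane so that two vertices are adjacent if and only if the corresponding disks intersect (tangent circles are considered to intersect). $N(v)$ is the set of neighbors of $v$; $K_{1,6}$ is the star with $6$ leaves. *)

theory Defs
  imports "HOL-Analysis.Analysis"
begin

definition simple_graph :: "'a set \<Rightarrow> ('a \<Rightarrow> 'a \<Rightarrow> bool) \<Rightarrow> bool" where
  "simple_graph V E \<longleftrightarrow>
     (\<forall>u\<in>V. \<forall>v\<in>V. E u v \<longleftrightarrow> E v u) \<and> (\<forall>v\<in>V. \<not> E v v)"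

definition circle_intersection_graph :: "'a set \<Rightarrow> ('a \<Rightarrow> 'a \<Rightarrow> bool) \<Rightarrow> bool" where
  "circle_intersection_graph V E \<longleftrightarrow>
     (\<exists>(c :: 'a \<Rightarrow> real^2) (r :: 'a \<Rightarrow> real).
        (\<forall>v\<in>V. r v > 0) \<and>
        inj_on (\<lambda>v. cball (c v) (r v)) V \<and>
        (\<forall>u\<in>V. \<forall>v\<in>V. u \<noteq> v \<longrightarrow>
            (E u v \<longleftrightarrow> cball (c u) (r u) \<inter> cball (c v) (r v) \<noteq> {})))"

definition nbhd :: "'a set \<Rightarrow> ('a \<Rightarrow> 'a \<Rightarrow> bool) \<Rightarrow> 'a \<Rightarrow> 'a set" where
  "nbhd V E v = {u \<in> V. u \<noteq> v \<and> E v u}"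

definition has_induced_K16 :: "'a set \<Rightarrow> ('a \<Rightarrow> 'a \<Rightarrow> bool) \<Rightarrow> bool" where
  "has_induced_K16 S E \<longleftrightarrow>
     (\<exists>x L. x \<in> S \<and> L \<subseteq> S \<and> x \<notin> L \<and> card L = 6 \<and>
        (\<forall>y\<in>L. E x y) \<and> (\<forall>y\<in>L. \<forall>z\<in>L. y \<noteq> z \<longrightarrow> \<not> E y z))"

end

theory Submission
  imports Defs
begin


lemma norm_c2: "cmod (Complex (x$1) (x$2)) = norm (x :: real^2)"
  by (simp add: norm_vec_def L2_set_def sum_2 norm_complex_def)

lemma seg_pt:
  fixes a b :: "'v::real_normed_vector"
  assumes "0 \<le> t" "t \<le> dist a b"
  shows "\<exists>q. dist q a = t \<and> dist q b = dist a b - t"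
proof (cases "dist a b = 0")
  case True then show ?thesis using assms by (intro exI[of _ a]) simp
next
  case False
  define d where "d = dist a b"
  have d0: "d > 0" using False d_def by simp
  define q where "q = a + (t/d) *\<^sub>R (b - a)"
  have "dist q a = norm ((t/d) *\<^sub>R (b - a))" by (simp add: q_def dist_norm)
  also have "\<dots> = (t/d) * d" using assms d0 by (simp add: d_def dist_norm norm_minus_commute)
  finally have 1: "dist q a = t" using d0 by simp
  have "q - b = (1 - t/d) *\<^sub>R (a - b)" by (simp add: q_def algebra_simps)
  then have "dist q b = (1 - t/d) * d" using assms d0 by (simp add: dist_norm d_def)
  also have "\<dots> = d - t" using d0 by (simp add: field_simps)
  finally show ?thesis using 1 d_def by blast
qed

lemma meet_cball:
  fixes a b :: "'v::real_normed_vector"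
  assumes "0 \<le> \<rho>" "0 \<le> \<sigma>" "dist a b \<le> \<rho> + \<sigma>"
  shows "cball a \<rho> \<inter> cball b \<sigma> \<noteq> {}"
proof (cases "dist a b \<le> \<rho>")
  case True then show ?thesis using assms by (metis IntI centre_in_cball empty_iff mem_cball)
next
  case False
  then obtain q where "dist q a = \<rho>" "dist q b = dist a b - \<rho>" using seg_pt[of \<rho> a b] assms by auto
  then have "q \<in> cball a \<rho>" "q \<in> cball b \<sigma>" using assms by (auto simp: dist_commute)
  then show ?thesis by blast
qed

lemma shrink_pt:
  fixes a b :: "'v::real_normed_vector"
  assumes "0 \<le> s" "s \<le> \<rho>" "dist a b \<le> \<rho> + s"
  shows "\<exists>q. dist q a \<le> \<rho> - s \<and> dist q b \<le> 2 * s"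
proof (cases "dist a b \<le> \<rho> - s")
  case True then show ?thesis using assms by (intro exI[of _ b]) (simp add: dist_commute)
next
  case False
  then obtain q where "dist q a = \<rho> - s" "dist q b = dist a b - (\<rho> - s)" using seg_pt[of "\<rho> - s" a b] assms by auto
  then show ?thesis using assms by (intro exI[of _ q]) simp
qed



lemma sq_ident: fixes a b p q s t :: real
  shows "(a * p - b * q)^2 + (a * s - b * t)^2 = a^2 * (p^2 + s^2) + b^2 * (q^2 + t^2) - 2*a*b*(p * q + s * t)"
  by (simp add: power2_eq_square algebra_simps)

lemma rcis_eq: "z = rcis (cmod z) (Arg z)" by (simp add: rcis_cmod_Arg)

lemma cmod_rcis_diff: "(cmod (rcis a x - rcis b y))^2 = (a * cos x - b * cos y)^2 + (a * sin x - b * sin y)^2"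
  unfolding cmod_power2 by simp

lemma trig_ident: fixes a b x y :: real shows "a^2 * ((cos x)^2 + (sin x)^2) + b^2 * ((cos y)^2 + (sin y)^2)
       - 2*a*b*(cos x * cos y + sin x * sin y) = a^2 + b^2 - 2*a*b*cos(x - y)"
  by (simp add: cos_diff)

lemma ab_mono: fixes a b c :: real shows "0 \<le> a \<Longrightarrow> 0 \<le> b \<Longrightarrow> 1/2 \<le> c \<Longrightarrow> a*b*1 \<le> a*b*(2*c)"
  by (intro mult_left_mono) auto

lemma sq_le_max: fixes a b R :: real
  assumes "0 \<le> a" "0 \<le> b" "a \<le> R" "b \<le> R" shows "a^2 + b^2 - a*b \<le> R^2"
proof (cases "a \<le> b")
  case True
  then have "a^2 - a*b \<le> 0" using assms by (simp add: power2_eq_square mult_left_mono)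
  moreover have "b^2 \<le> R^2" using assms by (simp add: power_mono)
  ultimately show ?thesis by linarith
next
  case False
  then have "b^2 - a*b \<le> 0" using assms by (simp add: power2_eq_square mult_right_mono)
  moreover have "a^2 \<le> R^2" using assms by (simp add: power_mono)
  ultimately show ?thesis by linarith
qed

lemma close_pts:
  fixes z w :: complex
  assumes "cmod z \<le> R" "cmod w \<le> R" "cos (Arg z - Arg w) \<ge> 1/2"
  shows "cmod (z - w) \<le> R"
proof -
  have "(cmod (z - w))^2 = (cmod (rcis (cmod z) (Arg z) - rcis (cmod w) (Arg w)))^2"
    by (simp only: rcis_cmod_Arg)
  also have "\<dots> = (cmod z * cos (Arg z) - cmod w * cos (Arg w))^2 + (cmod z * sin (Arg z) - cmod w * sin (Arg w))^2"
    by (rule cmod_rcis_diff)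
  also have "\<dots> = (cmod z)^2 * ((cos (Arg z))^2 + (sin (Arg z))^2) + (cmod w)^2 * ((cos (Arg w))^2 + (sin (Arg w))^2)
       - 2*(cmod z)*(cmod w)*(cos (Arg z) * cos (Arg w) + sin (Arg z) * sin (Arg w))" by (rule sq_ident)
  also have "\<dots> = (cmod z)^2 + (cmod w)^2 - 2*(cmod z)*(cmod w)*cos(Arg z - Arg w)"
    by (rule trig_ident)
  also have "\<dots> \<le> (cmod z)^2 + (cmod w)^2 - (cmod z)*(cmod w)"
    using ab_mono[OF norm_ge_zero[of z] norm_ge_zero[of w] assms(3)] by simp
  also have "\<dots> \<le> R^2" by (rule sq_le_max[OF norm_ge_zero norm_ge_zero assms(1,2)])
  finally have "(cmod (z - w))^2 \<le> R^2" .
  moreover have "0 \<le> R" using assms(1) norm_ge_zero[of z] by linarith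
  ultimately show ?thesis by (rule power2_le_imp_le)
qed

lemma cos_ge_half:
  assumes "\<bar>x\<bar> \<le> pi/3 \<or> (\<bar>x\<bar> \<ge> 5*pi/3 \<and> \<bar>x\<bar> \<le> 2*pi)"
  shows "cos x \<ge> 1/2"
proof -
  have c: "cos y \<ge> 1/2" if "0 \<le> y" "y \<le> pi/3" for y
  proof -
    have "cos (pi/3) \<le> cos y" using that by (intro cos_monotone_0_pi_le) auto
    then show ?thesis by (simp add: cos_60)
  qed
  show ?thesis
  proof (cases "\<bar>x\<bar> \<le> pi/3")
    case True then show ?thesis using c[of "\<bar>x\<bar>"] by simp
  next
    case False
    then have h: "0 \<le> 2*pi - \<bar>x\<bar>" "2*pi - \<bar>x\<bar> \<le> pi/3" using assms by auto
    have "cos (2*pi - \<bar>x\<bar>) = cos x" by (simp add: cos_diff)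
    then show ?thesis using c[OF h] by simp
  qed
qed

lemma spread:
  fixes A :: "real set"
  assumes "finite A" "A \<noteq> {}" "\<And>x y. x \<in> A \<Longrightarrow> y \<in> A \<Longrightarrow> x < y \<Longrightarrow> y - x > d"
  shows "(real (card A) - 1) * d \<le> Max A - Min A"
  using assms
proof (induction "card A" arbitrary: A)
  case 0 then show ?case by auto
next
  case (Suc n)
  show ?case
  proof (cases "n = 0")
    case True
    then have "card A = 1" using Suc by simp
    then show ?thesis using Suc.prems(1,2) by (simp add: Max_in Min_le)
  next
    case False
    define m where "m = Max A"
    define B where "B = A - {m}"
    have mA: "m \<in> A" using Suc m_def by simp
    have cB: "card B = n" using Suc mA B_def by simp
    have fB1: "finite B" using Suc.prems(1) B_def by simp
    have fB2: "B \<noteq> {}" proof assume "B = {}" then have "n = 0" using cB by simp then show False using False by simp qed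
    note fB = fB1 fB2
    have IH: "(real (card B) - 1) * d \<le> Max B - Min B"
    proof (rule Suc.hyps(1))
      show "n = card B" using cB by simp
      show "finite B" "B \<noteq> {}" using fB by auto
      fix x y assume "x \<in> B" "y \<in> B" "x < y"
      then show "y - x > d" using Suc.prems(3) B_def by auto
    qed
    have BA: "B \<subseteq> A" using B_def by auto
    have MB: "Max B \<in> B" using fB by simp
    have "Max B < m" using MB BA Suc.prems m_def B_def
      by (metis DiffE Max_ge fB(1) order_le_less singletonI Max_in rev_finite_subset)
    then have g: "m - Max B > d" using Suc.prems(3) MB BA mA by auto
    have "Min A \<le> Min B" by (rule Min_antimono[OF BA fB(2) Suc.prems(1)])
    moreover have "Min A \<in> B"
    proof -
      have "Min A \<noteq> m"
      proof
        assume h: "Min A = m"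
        have "Max B \<le> m" using MB BA m_def Suc.prems(1) by auto
        moreover have "Min A \<le> Max B" using MB BA Suc.prems(1) by auto
        ultimately show False using h \<open>Max B < m\<close> by linarith
      qed
      then show ?thesis using B_def Suc.prems(1,2) by simp
    qed
    then have "Min B \<le> Min A" using fB(1) by simp
    ultimately have "Min A = Min B" by simp
    moreover have "real (card A) = real n + 1" using Suc.hyps(2) by simp
    ultimately show ?thesis using IH g cB m_def by (simp add: algebra_simps)
  qed
qed

lemma six_pts:
  fixes P :: "complex set"
  assumes fin: "finite P" and c6: "card P = 6" and inR: "\<forall>z\<in>P. cmod z \<le> R"
    and far: "\<forall>z\<in>P. \<forall>w\<in>P. z \<noteq> w \<longrightarrow> cmod (z - w) > R"
  shows False
proof -
  have cosl: "cos (Arg z - Arg w) < 1/2" if "z \<in> P" "w \<in> P" "z \<noteq> w" for z w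
  proof (rule ccontr)
    assume "\<not> cos (Arg z - Arg w) < 1/2"
    then have "cmod (z - w) \<le> R" using close_pts inR that by simp
    then show False using far that by force
  qed
  have dif: "pi/3 < y - x \<and> y - x < 5*pi/3" if xy: "x \<in> Arg ` P" "y \<in> Arg ` P" "x < y" for x y
  proof -
    obtain z where z: "z \<in> P" "x = Arg z" using xy(1) by blast
    obtain w where w: "w \<in> P" "y = Arg w" using xy(2) by blast
    note zw = z(1) w(1) z(2) w(2)
    then have "z \<noteq> w" using xy by auto
    then have "cos (Arg w - Arg z) < 1/2" using cosl zw by simp
    then have "\<not> (\<bar>y - x\<bar> \<le> pi/3 \<or> (\<bar>y - x\<bar> \<ge> 5*pi/3 \<and> \<bar>y - x\<bar> \<le> 2*pi))"
      using cos_ge_half zw by force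
    moreover have "\<bar>y - x\<bar> \<le> 2*pi" using Arg_bounded[of z] Arg_bounded[of w] zw by auto
    ultimately show ?thesis using xy by auto
  qed
  have inj: "inj_on Arg P"
  proof (rule inj_onI)
    fix z w assume "z \<in> P" "w \<in> P" "Arg z = Arg w"
    then show "z = w" using cosl[of z w] by fastforce
  qed
  define A where "A = Arg ` P"
  have cA: "card A = 6" using card_image[OF inj] c6 A_def by simp
  have fA: "finite A" "A \<noteq> {}" using fin A_def cA by auto
  have "(real (card A) - 1) * (pi/3) \<le> Max A - Min A"
    by (rule spread[OF fA]) (use dif A_def in auto)
  then have h1: "5 * pi / 3 \<le> Max A - Min A" using cA by simp
  have "Min A \<noteq> Max A"
  proof
    assume "Min A = Max A"
    then have "A \<subseteq> {Min A}" using fA by (metis Max_ge Min_le antisym singleton_iff subsetI)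
    then have "card A \<le> card {Min A}" by (intro card_mono) simp_all
    then have "card A \<le> 1" by simp
    then show False using cA by simp
  qed
  then have "Min A < Max A" using fA by (simp add: Min_le_iff less_le)
  moreover have "Min A \<in> Arg ` P" "Max A \<in> Arg ` P" using fA A_def by (metis Min_in, metis Max_in)
  ultimately have "Max A - Min A < 5*pi/3" using dif by blast
  then show False using h1 by linarith
qed


theorem lemma5p1:
  fixes V :: "'a set" and E :: "'a \<Rightarrow> 'a \<Rightarrow> bool"
  assumes "finite V" and "V \<noteq> {}"
    and "simple_graph V E"
    and "circle_intersection_graph V E"
  shows "\<exists>v\<in>V. \<not> has_induced_K16 ({v} \<union> nbhd V E v) E"
proof -
  obtain c :: "'a \<Rightarrow> real^2" and r :: "'a \<Rightarrow> real" where
    rpos: "\<forall>v\<in>V. r v > 0" and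
    adj: "\<forall>u\<in>V. \<forall>v\<in>V. u \<noteq> v \<longrightarrow>
            (E u v \<longleftrightarrow> cball (c u) (r u) \<inter> cball (c v) (r v) \<noteq> {})"
    using assms(4) unfolding circle_intersection_graph_def by auto
  have "Min (r ` V) \<in> r ` V" using assms(1,2) by simp
  then obtain v where vV: "v \<in> V" and vmin: "r v = Min (r ` V)" by auto
  have rmin: "r v \<le> r u" if "u \<in> V" for u using vmin that assms(1) by simp
  have rv: "r v > 0" using rpos vV by simp
  show ?thesis
  proof (intro bexI[OF _ vV] notI)
    assume "has_induced_K16 ({v} \<union> nbhd V E v) E"
    then obtain x L where L0: "x \<in> {v} \<union> nbhd V E v" "L \<subseteq> {v} \<union> nbhd V E v" "x \<notin> L" "card L = 6"
      "\<forall>y\<in>L. E x y" "\<forall>y\<in>L. \<forall>z\<in>L. y \<noteq> z \<longrightarrow> \<not> E y z"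
      unfolding has_induced_K16_def by (elim exE conjE)
    note L = L0(2) L0(4) L0(6)
    have finL: "finite L" by (rule card_ge_0_finite) (simp add: L(2))
    have vL: "v \<notin> L"
    proof
      assume vL: "v \<in> L"
      have "L \<noteq> {v}"
      proof
        assume "L = {v}"
        then have "card L = 1" by simp
        then show False using L(2) by simp
      qed
      have "\<exists>y\<in>L. y \<noteq> v"
      proof (rule ccontr)
        assume "\<not> (\<exists>y\<in>L. y \<noteq> v)"
        then have "L \<subseteq> {v}" by auto
        then have "L = {v}" using vL by auto
        then show False using \<open>L \<noteq> {v}\<close> by simp
      qed
      then obtain y where y: "y \<in> L" "y \<noteq> v" by blast
      have "y \<in> {v} \<union> nbhd V E v" using L(1) y(1) by (rule subsetD)
      then have "y \<in> nbhd V E v" using y(2) by simp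
      then have "E v y" unfolding nbhd_def by simp
      moreover have "v \<noteq> y" using y(2) by simp
      then have "\<not> E v y" using L(3)[rule_format, OF vL y(1)] by simp
      ultimately show False by simp
    qed
    have LN: "u \<in> V \<and> u \<noteq> v \<and> E v u" if "u \<in> L" for u
    proof -
      have "u \<in> {v} \<union> nbhd V E v" using L(1) that by (rule subsetD)
      moreover have "u \<noteq> v" using vL that by auto
      ultimately have "u \<in> nbhd V E v" by simp
      then show ?thesis unfolding nbhd_def by simp
    qed
    have near: "dist (c u) (c v) \<le> r u + r v" if "u \<in> L" for u
    proof -
      have uV: "u \<in> V" "v \<noteq> u" "E v u" using LN[OF that] by auto
      have "E v u \<longleftrightarrow> cball (c v) (r v) \<inter> cball (c u) (r u) \<noteq> {}"
        using adj[rule_format, OF vV uV(1) uV(2)] .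
      then have "cball (c v) (r v) \<inter> cball (c u) (r u) \<noteq> {}" using uV(3) by simp
      then obtain q where "q \<in> cball (c v) (r v)" "q \<in> cball (c u) (r u)" by blast
      then have "dist (c v) q \<le> r v" "dist (c u) q \<le> r u" by auto
      then show ?thesis using dist_triangle[of "c u" "c v" q] dist_commute[of q "c v"] by linarith
    qed
    have farc: "dist (c y) (c z) > r y + r z" if yz: "y \<in> L" "z \<in> L" "y \<noteq> z" for y z
    proof (rule ccontr)
      assume "\<not> ?thesis"
      then have d: "dist (c y) (c z) \<le> r y + r z" by simp
      have yV: "y \<in> V" "z \<in> V" using LN yz by auto
      have "0 \<le> r y" "0 \<le> r z" using rpos yV by auto
      then have "cball (c y) (r y) \<inter> cball (c z) (r z) \<noteq> {}"
        using meet_cball d by blast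
      moreover have "E y z \<longleftrightarrow> cball (c y) (r y) \<inter> cball (c z) (r z) \<noteq> {}"
        using adj[rule_format, OF yV yz(3)] .
      ultimately have "E y z" by simp
      then show False using L(3) yz by blast
    qed
    have "\<forall>u\<in>L. \<exists>q. dist q (c u) \<le> r u - r v \<and> dist q (c v) \<le> 2 * r v"
    proof
      fix u assume uL: "u \<in> L"
      have "u \<in> V" using LN[OF uL] by simp
      then have "r v \<le> r u" by (rule rmin)
      then show "\<exists>q. dist q (c u) \<le> r u - r v \<and> dist q (c v) \<le> 2 * r v"
        using shrink_pt[of "r v" "r u" "c u" "c v"] rv near[OF uL] by simp
    qed
    from bchoice[OF this] obtain p where
      p: "\<forall>u\<in>L. dist (p u) (c u) \<le> r u - r v \<and> dist (p u) (c v) \<le> 2 * r v"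
      by blast
    have farp: "dist (p y) (p z) > 2 * r v" if "y \<in> L" "z \<in> L" "y \<noteq> z" for y z
    proof -
      have t1: "dist (c y) (c z) \<le> dist (c y) (p y) + dist (p y) (c z)" by (rule dist_triangle)
      have t2: "dist (p y) (c z) \<le> dist (p y) (p z) + dist (p z) (c z)" by (rule dist_triangle)
      have "dist (p y) (c y) \<le> r y - r v" "dist (p z) (c z) \<le> r z - r v"
        using p that by auto
      moreover have "dist (c y) (p y) = dist (p y) (c y)" by (rule dist_commute)
      ultimately show ?thesis using t1 t2 farc[OF that] by linarith
    qed
    define g where "g = (\<lambda>x::real^2. Complex (x$1 - c v$1) (x$2 - c v$2))"
    have gn: "cmod (g x) = dist x (c v)" for x
      using norm_c2[of "x - c v"] by (simp add: g_def dist_norm)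
    have gd: "cmod (g x - g y) = dist x y" for x y
      using norm_c2[of "x - y"] by (simp add: g_def dist_norm complex_diff)
    define P where "P = (g \<circ> p) ` L"
    have inj: "inj_on (g \<circ> p) L"
    proof (rule inj_onI)
      fix y z assume yz: "y \<in> L" "z \<in> L" "(g \<circ> p) y = (g \<circ> p) z"
      show "y = z"
      proof (rule ccontr)
        assume "y \<noteq> z"
        then have "dist (p y) (p z) > 2 * r v" using farp yz by blast
        moreover have "dist (p y) (p z) = 0" using gd[of "p y" "p z"] yz(3) by simp
        ultimately show False using rv by simp
      qed
    qed
    show False
    proof (rule six_pts)
      show "finite P" using finL P_def by simp
      show "card P = 6" using card_image[OF inj] L(2) P_def by simp
      show "\<forall>z\<in>P. cmod z \<le> 2 * r v" using p gn P_def by auto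
      show "\<forall>z\<in>P. \<forall>w\<in>P. z \<noteq> w \<longrightarrow> cmod (z - w) > 2 * r v"
      proof (intro ballI impI)
        fix z w assume zw: "z \<in> P" "w \<in> P" "z \<noteq> w"
        then obtain y y' where "y \<in> L" "y' \<in> L" "z = g (p y)" "w = g (p y')"
          using P_def by auto
        moreover then have "y \<noteq> y'" using zw(3) by auto
        ultimately show "cmod (z - w) > 2 * r v" using farp gd by simp
      qed
    qed
  qed
qed

end
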